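(* Let $B$ be an $n\times n$ matrix with integer entries such that $\mathrm{Trace}(B)\le n$. Then all eigenvalues of $B$ are real and positive if and only if $B=I+N$, where $I$ is the $n\times n$ identity matrix and $N$ is a nilpotent matrix.
   Context: Eigenvalues are taken over $\mathbb{C}$. *)

theory Defs
  imports "Jordan_Normal_Form.Char_Poly"
begin

definition nilpotent_mat :: "'a :: semiring_1 mat \<Rightarrow> bool" where
  "nilpotent_mat N \<longleftrightarrow> (\<exists>k. N ^\<^sub>m k = 0\<^sub>m (dim_row N) (dim_col N))"

definition mat_trace :: "'a :: comm_monoid_add mat \<Rightarrow> 'a" where
  "mat_trace A = (\<Sum>i<dim_row A. A $$ (i, i))"

end

theory Submission imports Defs "Jordan_Normal_Form.Schur_Decomposition"
begin

lemma trace_mult_comm: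
  fixes A B :: "'a::comm_ring_1 mat"
  assumes A: "A \<in> carrier_mat n m" and B: "B \<in> carrier_mat m n"
  shows "mat_trace (A * B) = mat_trace (B * A)"
proof -
  have "mat_trace (A * B) = (\<Sum>i<n. \<Sum>j<m. A $$ (i,j) * B $$ (j,i))"
    using A B unfolding mat_trace_def
    by (auto simp: scalar_prod_def atLeast0LessThan intro!: sum.cong)
  also have "\<dots> = (\<Sum>j<m. \<Sum>i<n. B $$ (j,i) * A $$ (i,j))"
    by (subst sum.swap) (simp add: mult.commute)
  also have "\<dots> = mat_trace (B * A)"
    using A B unfolding mat_trace_def
    by (auto simp: scalar_prod_def atLeast0LessThan intro!: sum.cong)
  finally show ?thesis .
qed

lemma trace_similar:
  fixes A :: "'a::comm_ring_1 mat"
  assumes A: "A \<in> carrier_mat n n" and w: "similar_mat_wit A T P Q"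
  shows "mat_trace A = mat_trace T"
proof -
  from A have n: "n = dim_row A" by auto
  note d = similar_mat_witD[OF n w]
  have "mat_trace A = mat_trace ((P * T) * Q)" using d by simp
  also have "\<dots> = mat_trace (Q * (P * T))"
    by (rule trace_mult_comm[of _ n n], insert d, auto)
  also have "Q * (P * T) = (Q * P) * T" using d by (metis assoc_mult_mat)
  also have "\<dots> = T" using d by (metis left_mult_one_mat)
  finally show ?thesis .
qed

lemma det_similar:
  fixes A :: "'a::comm_ring_1 mat"
  assumes A: "A \<in> carrier_mat n n" and w: "similar_mat_wit A T P Q"
  shows "det A = det T"
proof -
  from A have n: "n = dim_row A" by auto
  note d = similar_mat_witD[OF n w]
  have "det A = det (P * T) * det Q" using d det_mult[of "P * T" n Q] by simp
  also have "\<dots> = det P * det T * det Q" using d det_mult[of P n T] by simp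
  also have "det P * det Q = 1" using d det_mult[of P n Q] det_one by metis
  then have "det P * det T * det Q = det T" by (metis mult.commute mult.left_commute mult_1_right)
  finally show ?thesis .
qed

lemma trace_diag: "A \<in> carrier_mat n n \<Longrightarrow> mat_trace A = sum_list (diag_mat A)"
  unfolding mat_trace_def diag_mat_def
  by (simp add: interv_sum_list_conv_sum_set_nat atLeast0LessThan)

lemma strict_upper_pow:
  fixes S :: "'a::comm_ring_1 mat"
  assumes S: "S \<in> carrier_mat n n" and z: "\<And>i j. i < n \<Longrightarrow> j < n \<Longrightarrow> j \<le> i \<Longrightarrow> S $$ (i,j) = 0"
  shows "i < n \<Longrightarrow> j < n \<Longrightarrow> j < i + k \<Longrightarrow> (S ^\<^sub>m k) $$ (i,j) = 0"
proof (induct k arbitrary: i j)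
  case 0
  then show ?case using S by auto
next
  case (Suc k)
  have "(S ^\<^sub>m Suc k) $$ (i,j) = (\<Sum>l<n. (S ^\<^sub>m k) $$ (i,l) * S $$ (l,j))"
    using S Suc by (simp add: scalar_prod_def atLeast0LessThan)
  also have "\<dots> = 0"
  proof (rule sum.neutral, intro ballI)
    fix l assume l: "l \<in> {..<n}"
    show "(S ^\<^sub>m k) $$ (i,l) * S $$ (l,j) = 0"
    proof (cases "l < i + k")
      case True then show ?thesis using Suc l by simp
    next
      case False then have "j \<le> l" using Suc by simp
      then show ?thesis using z[of l j] l Suc by simp
    qed
  qed
  finally show ?case .
qed

lemma reals_all_one:
  fixes xs :: "real list"
  assumes pos: "\<forall>x\<in>set xs. x > 0" and p: "prod_list xs \<ge> 1" and s: "sum_list xs \<le> length xs"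
  shows "\<forall>x\<in>set xs. x = 1"
proof -
  have pp: "prod_list ys > 0" if "\<forall>x\<in>set ys. x > (0::real)" for ys
    using that by (induct ys) auto
  have lnp: "ln (prod_list xs) = sum_list (map ln xs)" using pos
    by (induct xs) (auto simp: ln_mult pp)
  have "ln (prod_list xs) \<ge> 0" using p by simp
  have sl: "sum_list (map (\<lambda>x. x - 1) xs) = sum_list xs - length xs"
    by (induct xs) auto
  have "sum_list (map (\<lambda>x. x - 1 - ln x) xs) = sum_list (map (\<lambda>x. x - 1) xs) - sum_list (map ln xs)"
    by (induct xs) auto
  also have "\<dots> \<le> 0" using sl s lnp \<open>ln (prod_list xs) \<ge> 0\<close> by simp
  finally have le: "sum_list (map (\<lambda>x. x - 1 - ln x) xs) \<le> 0" .
  have nn: "\<And>y. y \<in> set (map (\<lambda>x. x - 1 - ln x) xs) \<Longrightarrow> 0 \<le> y"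
    using pos ln_le_minus_one by fastforce
  then have "sum_list (map (\<lambda>x. x - 1 - ln x) xs) \<ge> 0" by (rule sum_list_nonneg)
  with le have "sum_list (map (\<lambda>x. x - 1 - ln x) xs) = 0" by simp
  with nn have "\<forall>y\<in>set (map (\<lambda>x. x - 1 - ln x) xs). y = 0"
    using sum_list_nonneg_eq_0_iff by blast
  then show ?thesis using pos ln_eq_minus_one by force
qed

lemma ofr_prod: "prod_list (map of_real xs) = (of_real (prod_list xs) :: complex)"
  by (induct xs) auto
lemma ofr_sum: "sum_list (map of_real xs) = (of_real (sum_list xs) :: complex)"
  by (induct xs) auto

theorem mainTheorem3:
  fixes B :: "int mat" and n :: nat
  assumes "B \<in> carrier_mat n n"
    and "mat_trace B \<le> int n"
  shows "(\<forall>z::complex. eigenvalue (map_mat of_int B) z \<longrightarrow> z \<in> \<real> \<and> Re z > 0)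
     \<longleftrightarrow> (\<exists>N \<in> carrier_mat n n. nilpotent_mat N \<and> B = 1\<^sub>m n + N)"
proof
  define A where "A = (map_mat of_int B :: complex mat)"
  have Bc: "B \<in> carrier_mat n n" by fact
  have Ac: "A \<in> carrier_mat n n" using Bc unfolding A_def by simp
  assume ev: "\<forall>z::complex. eigenvalue (map_mat of_int B) z \<longrightarrow> z \<in> \<real> \<and> Re z > 0"
  obtain es where cp: "char_poly A = (\<Prod> a \<leftarrow> es. [:- a, 1:])" and len: "length es = n"
    using char_poly_factorized[OF Ac] by blast
  obtain T P Q where sd: "schur_decomposition A es = (T,P,Q)" by (cases "schur_decomposition A es") auto
  from schur_decomposition[OF Ac cp sd] have w: "similar_mat_wit A T P Q" and ut: "upper_triangular T"
    and dT: "diag_mat T = es" by auto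
  have nA: "n = dim_row A" using Ac by simp
  note d = similar_mat_witD[OF nA w]
  have esev: "e \<in> \<real> \<and> Re e > 0" if e: "e \<in> set es" for e
  proof -
    have "poly (char_poly A) e = 0" unfolding cp using e
      by (simp add: poly_prod_list_zero_iff)
    then have "eigenvalue A e" using eigenvalue_root_char_poly[OF Ac] by simp
    then show ?thesis using ev unfolding A_def by blast
  qed
  define rs where "rs = map Re es"
  have esrs: "es = map of_real rs" unfolding rs_def using esev
    by (simp add: map_idI Reals_def)
  have rpos: "\<forall>x\<in>set rs. x > 0" unfolding rs_def using esev by auto
  have "complex_of_int (det B) = det A" unfolding A_def by simp
  also have "\<dots> = det T" by (rule det_similar[OF Ac w])
  also have "\<dots> = prod_list es" using det_upper_triangular[OF ut d(5)] dT by simp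
  also have "\<dots> = of_real (prod_list rs)" unfolding esrs by (simp add: ofr_prod)
  finally have "of_real (real_of_int (det B)) = (of_real (prod_list rs) :: complex)" by simp
  then have pd: "prod_list rs = real_of_int (det B)" using of_real_eq_iff by metis
  have "prod_list rs > 0" using rpos by (induct rs) auto
  then have "det B \<ge> 1" using pd by simp
  then have p1: "prod_list rs \<ge> 1" using pd by simp
  have "complex_of_int (mat_trace B) = mat_trace A" unfolding A_def mat_trace_def using Bc by simp
  also have "\<dots> = mat_trace T" by (rule trace_similar[OF Ac w])
  also have "\<dots> = sum_list es" using trace_diag[OF d(5)] dT by simp
  also have "\<dots> = of_real (sum_list rs)" unfolding esrs by (simp add: ofr_sum)
  finally have "of_real (real_of_int (mat_trace B)) = (of_real (sum_list rs) :: complex)" by simp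
  then have "sum_list rs = real_of_int (mat_trace B)" using of_real_eq_iff by metis
  then have s1: "sum_list rs \<le> length rs" using assms(2) len unfolding rs_def by simp
  from reals_all_one[OF rpos p1 s1] have "\<forall>x\<in>set rs. x = 1" .
  then have es1: "\<forall>e\<in>set es. e = 1" unfolding esrs by auto
  define S where "S = T - 1\<^sub>m n"
  have Sc: "S \<in> carrier_mat n n" unfolding S_def using d(5) by (auto intro: minus_carrier_mat)
  have Sz: "S $$ (i,j) = 0" if "i < n" "j < n" "j \<le> i" for i j
  proof (cases "j = i")
    case True
    have "T $$ (i,i) = es ! i" using dT[symmetric] that d(5) by (simp add: diag_mat_def)
    also have "\<dots> = 1" using es1 len that by simp
    finally show ?thesis using True that d(5) unfolding S_def by simp
  next
    case False
    then show ?thesis using ut that d(5) unfolding S_def upper_triangular_def by auto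
  qed
  have Sn: "S ^\<^sub>m n = 0\<^sub>m n n"
    by (rule eq_matI, insert Sc strict_upper_pow[OF Sc Sz], auto)
  have w2: "similar_mat_wit (A - 1\<^sub>m n) S P Q"
  proof (rule similar_mat_witI[of P Q n])
    have "P * S * Q = (P * T - P * 1\<^sub>m n) * Q" unfolding S_def
      using d by (simp add: mult_minus_distrib_mat[of P n n T n "1\<^sub>m n"])
    also have "\<dots> = P * T * Q - P * 1\<^sub>m n * Q"
      using d by (intro minus_mult_distrib_mat[of _ n n _ Q n]) auto
    also have "\<dots> = A - 1\<^sub>m n" using d by (simp add: assoc_mult_mat[of P n n T n Q n])
    finally show "A - 1\<^sub>m n = P * S * Q" by simp
  qed (insert d Sc, auto)
  have "(A - 1\<^sub>m n) ^\<^sub>m n = P * S ^\<^sub>m n * Q" by (rule similar_mat_wit_pow_id[OF w2])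
  also have "\<dots> = 0\<^sub>m n n" unfolding Sn using d by simp
  finally have An: "(A - 1\<^sub>m n) ^\<^sub>m n = 0\<^sub>m n n" .
  define N where "N = B - 1\<^sub>m n"
  have Nc: "N \<in> carrier_mat n n" unfolding N_def by (intro minus_carrier_mat) simp
  have mN: "map_mat of_int N = A - 1\<^sub>m n" unfolding N_def A_def
    by (rule eq_matI, insert Bc, auto)
  have "map_mat of_int (N ^\<^sub>m n) = (map_mat of_int N :: complex mat) ^\<^sub>m n"
    by (rule of_int_hom.mat_hom_pow[OF Nc])
  then have "map_mat (of_int :: int \<Rightarrow> complex) (N ^\<^sub>m n) = 0\<^sub>m n n" using mN An by simp
  then have X: "map_mat (of_int :: int \<Rightarrow> complex) (N ^\<^sub>m n) = 0\<^sub>m n n" .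
  have "N ^\<^sub>m n = 0\<^sub>m n n"
  proof (rule eq_matI)
    fix i j assume ij: "i < dim_row (0\<^sub>m n n :: int mat)" "j < dim_col (0\<^sub>m n n :: int mat)"
    have "map_mat (of_int :: int \<Rightarrow> complex) (N ^\<^sub>m n) $$ (i,j) = (0\<^sub>m n n :: complex mat) $$ (i,j)"
      using X by simp
    then show "(N ^\<^sub>m n) $$ (i,j) = (0\<^sub>m n n :: int mat) $$ (i,j)" using ij Nc by simp
  qed (insert Nc, auto)
  then have "nilpotent_mat N" unfolding nilpotent_mat_def using Nc by auto
  moreover have "B = 1\<^sub>m n + N" unfolding N_def by (rule eq_matI, insert Bc, auto)
  ultimately show "\<exists>N \<in> carrier_mat n n. nilpotent_mat N \<and> B = 1\<^sub>m n + N" using Nc by blast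
next
  assume "\<exists>N \<in> carrier_mat n n. nilpotent_mat N \<and> B = 1\<^sub>m n + N"
  then obtain N k where Nc: "N \<in> carrier_mat n n" and Nk: "N ^\<^sub>m k = 0\<^sub>m n n" and BN: "B = 1\<^sub>m n + N"
    unfolding nilpotent_mat_def by auto
  show "\<forall>z::complex. eigenvalue (map_mat of_int B) z \<longrightarrow> z \<in> \<real> \<and> Re z > 0"
  proof (intro allI impI)
    fix z :: complex
    define M where "M = (map_mat of_int N :: complex mat)"
    have Mc: "M \<in> carrier_mat n n" unfolding M_def using Nc by simp
    have AM: "map_mat of_int B = 1\<^sub>m n + M" unfolding M_def BN by (rule eq_matI, insert Nc, auto)
    assume "eigenvalue (map_mat of_int B) z"
    then obtain v where v: "v \<in> carrier_vec n" "v \<noteq> 0\<^sub>v n" and Av: "(1\<^sub>m n + M) *\<^sub>v v = z \<cdot>\<^sub>v v"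
      unfolding eigenvalue_def eigenvector_def AM using Mc by auto
    have "(1\<^sub>m n + M) *\<^sub>v v = v + M *\<^sub>v v" using Mc v add_mult_distrib_mat_vec[of "1\<^sub>m n" n n M v] by simp
    then have e: "v + M *\<^sub>v v = z \<cdot>\<^sub>v v" using Av by simp
    have "M *\<^sub>v v = (z - 1) \<cdot>\<^sub>v v"
    proof (rule eq_vecI)
      fix i assume "i < dim_vec ((z - 1) \<cdot>\<^sub>v v)"
      then have i: "i < n" using v by simp
      have "(v + M *\<^sub>v v) $ i = (z \<cdot>\<^sub>v v) $ i" using e by simp
      then show "(M *\<^sub>v v) $ i = ((z - 1) \<cdot>\<^sub>v v) $ i" using i v Mc
        by (simp add: algebra_simps)
    qed (insert v Mc, auto)
    then have evM: "eigenvector M v (z - 1)" unfolding eigenvector_def using v Mc by auto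
    have z0: "map_mat (of_int :: int \<Rightarrow> complex) (0\<^sub>m n n) = 0\<^sub>m n n" by (rule eq_matI) auto
    have hp: "map_mat (of_int :: int \<Rightarrow> complex) (N ^\<^sub>m k) = (map_mat of_int N) ^\<^sub>m k"
      by (rule of_int_hom.mat_hom_pow[OF Nc])
    have "M ^\<^sub>m k = 0\<^sub>m n n" unfolding M_def
      using hp Nk z0 by simp
    have z0v: "0\<^sub>m n n *\<^sub>v v = 0\<^sub>v n" by (rule eq_vecI, insert v, auto simp: scalar_prod_def intro!: sum.neutral)
    then have "0\<^sub>v n = (z - 1) ^ k \<cdot>\<^sub>v v" using eigenvector_pow[OF Mc evM, of k] v
      \<open>M ^\<^sub>m k = 0\<^sub>m n n\<close> by simp
    moreover obtain i where i: "i < n" "v $ i \<noteq> 0" using v by (metis eq_vecI carrier_vecD index_zero_vec)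
    ultimately have "(z - 1) ^ k * v $ i = 0" by (metis index_smult_vec(1) index_zero_vec(1) carrier_vecD v(1))
    then have "z = 1" using i by simp
    then show "z \<in> \<real> \<and> Re z > 0" by simp
  qed
qed

end
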